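(* Let $G$ be a unimodular lcsc group with Haar measure $m_G$, let $d$ be a left-invariant metric on $G$ whose closed balls $B_t=\{g: d(e,g)\le t\}$ are compact of positive measure, and let $\beta_t$ be the probability measure with density $\chi_{B_t}/m_G(B_t)$. Fix $r>0$ and $1<p<\infty$, and suppose that for all $F\in L^p(G)$, $$\Big\|\sup_{0<t\le r}|\rho(\beta_t)F|\Big\|_{L^p(G)}\le C_p\|F\|_{L^p(G)},\qquad \rho(\beta_t)F(g)=\int_G F(gh)\,d\beta_t(h).$$ Then (1) for every measure-preserving action of $G$ on a $\sigma$-finite measure space $(X,m)$, every $f\in L^p(X)$ and every $R\ge 2r$, $$\Big\|\sup_{0<t\le r}|\pi(\beta_t)f|\Big\|_{L^p(X)}\le C_p\Big(\frac{m_G(B_R)}{m_G(B_{R-r})}\Big)^{1/p}\|f\|_{L^p(X)};$$ (2) consequently, if $\lim_{R\to\infty}m_G(B_R)/m_G(B_{R-r})=1$ for every $r>0$ and the hypothesis holds for every $r>0$ with the same constant $C_p$, then $\|\sup_{0<t<\infty}|\pi(\beta_t)f|\|_{L^p(X)}\le C_p\|f\|_{L^p(X)}$ in every such action.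
   Context: For a measure-preserving action of $G$ on $(X,m)$ and a probability measure $\mu$ on $G$, $\pi(\mu)f(x)=\int_G f(g^{-1}x)\,d\mu(g)$. *)

theory Defs
  imports "HOL-Analysis.Analysis"
begin

definition lcsc_group :: "('g::{t2_space,second_countable_topology} \<Rightarrow> 'g \<Rightarrow> 'g) \<Rightarrow> 'g \<Rightarrow> ('g \<Rightarrow> 'g) \<Rightarrow> bool" where
  "lcsc_group gm e ginv \<longleftrightarrow>
     (\<forall>x y z. gm (gm x y) z = gm x (gm y z)) \<and>
     (\<forall>x. gm e x = x \<and> gm x e = x) \<and>
     (\<forall>x. gm (ginv x) x = e \<and> gm x (ginv x) = e) \<and>
     continuous_on UNIV (\<lambda>(x,y). gm x y) \<and> continuous_on UNIV ginv \<and>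
     locally_compact_space (euclidean :: 'g topology)"

definition left_haar :: "('g::topological_space \<Rightarrow> 'g \<Rightarrow> 'g) \<Rightarrow> 'g measure \<Rightarrow> bool" where
  "left_haar gm mG \<longleftrightarrow>
     sets mG = sets borel \<and>
     (\<forall>g A. A \<in> sets mG \<longrightarrow> emeasure mG ((\<lambda>x. gm g x) ` A) = emeasure mG A) \<and>
     (\<forall>K. compact K \<longrightarrow> emeasure mG K < \<infinity>) \<and>
     (\<forall>U. open U \<and> U \<noteq> {} \<longrightarrow> emeasure mG U > 0)"

definition unimodular_haar :: "('g::topological_space \<Rightarrow> 'g \<Rightarrow> 'g) \<Rightarrow> 'g measure \<Rightarrow> bool" where
  "unimodular_haar gm mG \<longleftrightarrow> left_haar gm mG \<and>
     (\<forall>g A. A \<in> sets mG \<longrightarrow> emeasure mG ((\<lambda>x. gm x g) ` A) = emeasure mG A)"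

definition left_inv_metric :: "('g \<Rightarrow> 'g \<Rightarrow> 'g) \<Rightarrow> ('g \<Rightarrow> 'g \<Rightarrow> real) \<Rightarrow> bool" where
  "left_inv_metric gm d \<longleftrightarrow>
     (\<forall>x y. d x y = 0 \<longleftrightarrow> x = y) \<and> (\<forall>x y. d x y = d y x) \<and>
     (\<forall>x y z. d x z \<le> d x y + d y z) \<and>
     (\<forall>g x y. d (gm g x) (gm g y) = d x y)"

definition Bt :: "('g \<Rightarrow> 'g \<Rightarrow> real) \<Rightarrow> 'g \<Rightarrow> real \<Rightarrow> 'g set" where
  "Bt d e t = {g. d e g \<le> t}"

definition rho_beta :: "('g \<Rightarrow> 'g \<Rightarrow> 'g) \<Rightarrow> 'g measure \<Rightarrow> ('g \<Rightarrow> 'g \<Rightarrow> real) \<Rightarrow> 'g \<Rightarrow> real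
    \<Rightarrow> ('g \<Rightarrow> real) \<Rightarrow> 'g \<Rightarrow> real" where
  "rho_beta gm mG d e t F g = (\<integral>h. indicator (Bt d e t) h * F (gm g h) \<partial>mG) / measure mG (Bt d e t)"

definition pi_beta :: "('g \<Rightarrow> 'x \<Rightarrow> 'x) \<Rightarrow> ('g \<Rightarrow> 'g) \<Rightarrow> 'g measure \<Rightarrow> ('g \<Rightarrow> 'g \<Rightarrow> real) \<Rightarrow> 'g
    \<Rightarrow> real \<Rightarrow> ('x \<Rightarrow> real) \<Rightarrow> 'x \<Rightarrow> real" where
  "pi_beta a ginv mG d e t f x = (\<integral>g. indicator (Bt d e t) g * f (a (ginv g) x) \<partial>mG) / measure mG (Bt d e t)"

definition mp_action :: "('g \<Rightarrow> 'g \<Rightarrow> 'g) \<Rightarrow> 'g \<Rightarrow> 'g measure \<Rightarrow> 'x measure \<Rightarrow> ('g \<Rightarrow> 'x \<Rightarrow> 'x) \<Rightarrow> bool" where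
  "mp_action gm e mG M a \<longleftrightarrow>
     (\<lambda>(g,x). a g x) \<in> measurable (mG \<Otimes>\<^sub>M M) M \<and>
     (\<forall>x \<in> space M. a e x = x) \<and>
     (\<forall>g h. \<forall>x \<in> space M. a (gm g h) x = a g (a h x)) \<and>
     (\<forall>g. a g \<in> measurable M M \<and> distr M M (a g) = M)"

definition epowr :: "ennreal \<Rightarrow> real \<Rightarrow> ennreal" where
  "epowr x q = (if x = \<infinity> then \<infinity> else ennreal (enn2real x powr q))"

definition Lp_norm :: "'a measure \<Rightarrow> real \<Rightarrow> ('a \<Rightarrow> ennreal) \<Rightarrow> ennreal" where
  "Lp_norm M p F = epowr (\<integral>\<^sup>+ x. epowr (F x) p \<partial>M) (1/p)"

definition in_Lp :: "'a measure \<Rightarrow> real \<Rightarrow> ('a \<Rightarrow> real) \<Rightarrow> bool" where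
  "in_Lp M p f \<longleftrightarrow> f \<in> borel_measurable M \<and> Lp_norm M p (\<lambda>x. ennreal \<bar>f x\<bar>) < \<infinity>"

definition local_max_ineq where
  "local_max_ineq gm mG d e p C r \<longleftrightarrow>
     (\<forall>F. in_Lp mG p F \<longrightarrow>
        Lp_norm mG p (\<lambda>g. SUP t\<in>{0<..r}. ennreal \<bar>rho_beta gm mG d e t F g\<bar>)
          \<le> ennreal C * Lp_norm mG p (\<lambda>g. ennreal \<bar>F g\<bar>))"

end

theory Submission
  imports Defs
begin



lemma epowr_ennreal: "0 \<le> y \<Longrightarrow> epowr (ennreal y) q = ennreal (y powr q)"
  by (simp add: epowr_def)

lemma fin_cases:
  assumes "(x::ennreal) \<noteq> \<infinity>" obtains r where "x = ennreal r" "0 \<le> r"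
  using assms by (cases x rule: ennreal_cases) auto

lemma epowr_mono: assumes "x \<le> y" "0 < q" shows "epowr x q \<le> epowr y q"
proof (cases "y = \<infinity>")
  case True thus ?thesis by (simp add: epowr_def)
next
  case False
  then have "x \<noteq> \<infinity>" using assms top_unique by fastforce
  then show ?thesis using assms False
    by (auto simp: epowr_def ennreal_leI powr_mono2 enn2real_mono top.not_eq_extremum)
qed

lemma epowr_measurable[measurable]:
  "h \<in> borel_measurable M \<Longrightarrow> (\<lambda>x. epowr (h x) q) \<in> borel_measurable M"
  unfolding epowr_def by (intro measurable_If) auto

lemma epowr_SUP_le:
  assumes q: "0 < q"
  shows "epowr (SUP i\<in>I. y i) q \<le> (SUP i\<in>I. epowr (y i) q)"
proof (cases "(SUP i\<in>I. epowr (y i) q) = \<infinity>")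
  case True then show ?thesis by (simp only:) simp
next
  case False
  then obtain z where z: "(SUP i\<in>I. epowr (y i) q) = ennreal z" "0 \<le> z"
    by (rule fin_cases)
  have yb: "y i \<le> ennreal (z powr (1/q))" if i: "i \<in> I" for i
  proof -
    have le: "epowr (y i) q \<le> ennreal z" using i z(1) SUP_upper by metis
    then have "y i \<noteq> \<infinity>" by (auto simp: epowr_def top_unique)
    then obtain w where w: "y i = ennreal w" "0 \<le> w" by (rule fin_cases)
    then have "w powr q \<le> z" using le z(2) by (simp add: epowr_def)
    then have "(w powr q) powr (1/q) \<le> z powr (1/q)" using q w(2) by (intro powr_mono2) auto
    then have "w \<le> z powr (1/q)" using q w(2) by (simp add: powr_powr)
    then show ?thesis using w by (simp add: ennreal_leI)
  qed
  have "epowr (SUP i\<in>I. y i) q \<le> epowr (ennreal (z powr (1/q))) q"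
    by (rule epowr_mono) (auto intro!: SUP_least yb q)
  also have "\<dots> = ennreal z" using q z(2) by (simp add: epowr_ennreal powr_powr)
  finally show ?thesis using z by simp
qed

lemma conv:
  assumes I: "I \<le> ennreal (max C 0 powr p * K * J)" and K: "0 \<le> K" and J: "0 \<le> J" and p: "0 < p"
  shows "epowr I (1/p) \<le> ennreal (C * K powr (1/p)) * epowr (ennreal J) (1/p)"
proof -
  have "I \<noteq> \<infinity>" using I by (auto simp: top_unique)
  then obtain i where i: "I = ennreal i" "0 \<le> i" by (rule fin_cases)
  have ile: "i \<le> max C 0 powr p * K * J" using I i K J
    by (simp add: ennreal_le_iff)
  show ?thesis
  proof (cases "C \<le> 0")
    case True
    then have "i = 0" using ile i(2) by simp
    then show ?thesis using i by (simp add: epowr_def)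
  next
    case False
    then have C: "0 < C" by simp
    have "i powr (1/p) \<le> (C powr p * K * J) powr (1/p)"
      using ile C i(2) p by (intro powr_mono2) auto
    also have "\<dots> = C * K powr (1/p) * J powr (1/p)"
      using C K J p by (simp add: powr_mult powr_powr)
    finally have "i powr (1/p) \<le> C * K powr (1/p) * J powr (1/p)" .
    then show ?thesis using i C K J
      by (simp add: epowr_ennreal ennreal_mult'[symmetric] ennreal_leI)
  qed
qed

lemma conv_back:
  assumes "epowr A (1/p) \<le> ennreal C * epowr B (1/p)" and "B < \<infinity>" and p: "0 < p"
  shows "A \<le> ennreal (max C 0 powr p) * B"
proof -
  have "B \<noteq> \<infinity>" using assms(2) by simp
  then obtain b where b: "B = ennreal b" "0 \<le> b" by (rule fin_cases)
  have "A \<noteq> \<infinity>"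
  proof
    assume "A = \<infinity>"
    then have "\<infinity> \<le> ennreal C * ennreal (b powr (1/p))" using assms(1) b by (simp add: epowr_def)
    moreover have "ennreal C * ennreal (b powr (1/p)) < \<infinity>" by (simp add: ennreal_mult_less_top)
    ultimately show False by (simp add: top_unique)
  qed
  then obtain x where x: "A = ennreal x" "0 \<le> x" by (rule fin_cases)
  have h: "ennreal (x powr (1/p)) \<le> ennreal C * ennreal (b powr (1/p))"
    using assms(1) x b by (simp add: epowr_ennreal)
  show ?thesis
  proof (cases "C \<le> 0")
    case True
    then have "ennreal C = 0" by (simp add: ennreal_eq_0_iff)
    then have "x powr (1/p) \<le> 0" using h by simp
    then have "x = 0" using x(2) by (simp add: antisym)
    then show ?thesis using x by simp
  next
    case False
    then have C: "0 < C" by simp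
    have "x powr (1/p) \<le> C * b powr (1/p)" using h C b
      by (simp add: ennreal_mult'[symmetric] ennreal_le_iff)
    then have "(x powr (1/p)) powr p \<le> (C * b powr (1/p)) powr p"
      using x p by (intro powr_mono2) auto
    then have "x \<le> C powr p * b" using x b C p by (simp add: powr_powr powr_mult)
    then show ?thesis using x b C by (simp add: ennreal_mult'[symmetric] ennreal_leI)
  qed
qed




locale ts =
  fixes gm :: "'g::{t2_space,second_countable_topology} \<Rightarrow> 'g \<Rightarrow> 'g"
    and e :: 'g and ginv :: "'g \<Rightarrow> 'g" and mG :: "'g measure"
    and d :: "'g \<Rightarrow> 'g \<Rightarrow> real" and p :: real
    and M :: "'x measure" and a :: "'g \<Rightarrow> 'x \<Rightarrow> 'x"
  assumes G: "lcsc_group gm e ginv" and haar: "left_haar gm mG"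
    and metric: "left_inv_metric gm d"
    and balls: "\<forall>t>0. compact (Bt d e t) \<and> emeasure mG (Bt d e t) > 0"
    and p: "1 < p"
    and act: "mp_action gm e mG M a" and sf: "sigma_finite_measure M"
begin

lemma assoc: "gm (gm x y) z = gm x (gm y z)" using G by (simp add: lcsc_group_def)
lemma lid: "gm e x = x" using G by (simp add: lcsc_group_def)
lemma rid: "gm x e = x" using G by (simp add: lcsc_group_def)
lemma linv: "gm (ginv x) x = e" using G by (simp add: lcsc_group_def)
lemma rinv: "gm x (ginv x) = e" using G by (simp add: lcsc_group_def)

lemma cancel1: "gm x (gm (ginv x) y) = y"
  by (simp add: assoc[symmetric] rinv lid)
lemma cancel2: "gm (ginv x) (gm x y) = y"
  by (simp add: assoc[symmetric] linv lid)

lemma ginv_mult: "ginv (gm g h) = gm (ginv h) (ginv g)"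
proof -
  have k: "gm (gm g h) (gm (ginv h) (ginv g)) = e"
    by (simp add: assoc cancel1 rinv)
  have "ginv (gm g h) = gm (ginv (gm g h)) (gm (gm g h) (gm (ginv h) (ginv g)))"
    by (simp only: k rid)
  also have "\<dots> = gm (ginv h) (ginv g)" by (rule cancel2)
  finally show ?thesis .
qed

lemma sets_mG: "sets mG = sets borel" using haar by (simp add: left_haar_def)
lemma space_mG[simp]: "space mG = UNIV" using sets_eq_imp_space_eq[OF sets_mG] by simp

lemma Bt_sets[measurable]: "0 < t \<Longrightarrow> Bt d e t \<in> sets mG"
proof -
  assume "0 < t"
  then have "closed (Bt d e t)" using balls compact_imp_closed by blast
  then show ?thesis by (simp add: sets_mG)
qed

lemma Bt_fin: "0 < t \<Longrightarrow> emeasure mG (Bt d e t) < \<infinity>"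
  using balls haar by (auto simp: left_haar_def)

lemma Bt_emeasure: "0 < t \<Longrightarrow> emeasure mG (Bt d e t) = ennreal (measure mG (Bt d e t))"
  using Bt_fin by (intro emeasure_eq_ennreal_measure) (simp add: less_top)

lemma Bt_pos: "0 < t \<Longrightarrow> 0 < measure mG (Bt d e t)"
  using balls Bt_emeasure by (metis ennreal_less_zero_iff)

lemma Bt_mono: "s \<le> t \<Longrightarrow> Bt d e s \<subseteq> Bt d e t"
  by (auto simp: Bt_def)

lemma sf_mG: "sigma_finite_measure mG"
proof
  let ?A = "range (\<lambda>n::nat. Bt d e (real (Suc n)))"
  have "\<Union>?A = UNIV"
  proof safe
    fix g
    obtain n :: nat where "d e g \<le> real n" using real_arch_simple by blast
    then have "g \<in> Bt d e (real (Suc n))" by (auto simp: Bt_def)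
    then show "g \<in> \<Union>?A" by blast
  qed auto
  moreover have "?A \<subseteq> sets mG" by auto
  moreover have "\<forall>a\<in>?A. emeasure mG a \<noteq> \<infinity>" using Bt_fin by (auto simp: less_top[symmetric])
  ultimately show "\<exists>A. countable A \<and> A \<subseteq> sets mG \<and> \<Union>A = space mG \<and> (\<forall>a\<in>A. emeasure mG a \<noteq> \<infinity>)"
    by (intro exI[of _ ?A]) auto
qed

lemma psf: "pair_sigma_finite mG M"
  using sf_mG sf by (simp add: pair_sigma_finite_def)

lemma psf2: "pair_sigma_finite M mG"
  using sf_mG sf by (simp add: pair_sigma_finite_def)

lemma ginv_meas[measurable]: "ginv \<in> measurable mG mG"
proof -
  have "continuous_on UNIV ginv" using G by (simp add: lcsc_group_def)
  then have "ginv \<in> borel_measurable borel" by (rule borel_measurable_continuous_onI)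
  then show ?thesis by (simp cong: measurable_cong_sets add: sets_mG)
qed

lemma act_meas: "(\<lambda>(g,x). a g x) \<in> measurable (mG \<Otimes>\<^sub>M M) M"
  using act by (simp add: mp_action_def)

lemma actI_meas[measurable]: "(\<lambda>z. a (ginv (fst z)) (snd z)) \<in> measurable (mG \<Otimes>\<^sub>M M) M"
proof -
  have "(\<lambda>z. (ginv (fst z), snd z)) \<in> measurable (mG \<Otimes>\<^sub>M M) (mG \<Otimes>\<^sub>M M)"
    by (rule measurable_Pair[OF measurable_compose[OF measurable_fst ginv_meas] measurable_snd])
  from measurable_comp[OF this act_meas] show ?thesis by (simp add: comp_def case_prod_beta)
qed

lemma actI_meas2[measurable]: "(\<lambda>z. a (ginv (snd z)) (fst z)) \<in> measurable (M \<Otimes>\<^sub>M mG) M"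
proof -
  have "(\<lambda>z. (snd z, fst z)) \<in> measurable (M \<Otimes>\<^sub>M mG) (mG \<Otimes>\<^sub>M M)"
    by (rule measurable_Pair[OF measurable_snd measurable_fst])
  from measurable_comp[OF this actI_meas] show ?thesis by (simp add: comp_def)
qed

lemma actI_meas_g[measurable]: "x \<in> space M \<Longrightarrow> (\<lambda>g. a (ginv g) x) \<in> measurable mG M"
proof -
  assume x: "x \<in> space M"
  have "(\<lambda>g. (g, x)) \<in> measurable mG (mG \<Otimes>\<^sub>M M)"
    by (rule measurable_Pair[OF measurable_ident_sets[OF refl] measurable_const[OF x]])
  from measurable_comp[OF this actI_meas] show ?thesis by (simp add: comp_def)
qed

lemma a_meas[measurable]: "a g \<in> measurable M M" using act by (simp add: mp_action_def)
lemma a_distr: "distr M M (a g) = M" using act by (simp add: mp_action_def)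
lemma a_space: "x \<in> space M \<Longrightarrow> a g x \<in> space M" by (rule measurable_space[OF a_meas])
lemma a_mult: "x \<in> space M \<Longrightarrow> a (gm g h) x = a g (a h x)" using act by (simp add: mp_action_def)

lemma nn_pres:
  assumes h: "h \<in> borel_measurable M" shows "(\<integral>\<^sup>+x. h (a g x) \<partial>M) = integral\<^sup>N M h"
proof -
  have "integral\<^sup>N (distr M M (a g)) h = (\<integral>\<^sup>+x. h (a g x) \<partial>M)"
    by (rule nn_integral_distr[OF a_meas]) (simp only: a_distr h)
  then show ?thesis by (simp only: a_distr)
qed

lemma d_tri: "d x z \<le> d x y + d y z" using metric by (simp add: left_inv_metric_def)
lemma d_left: "d (gm g x) (gm g y) = d x y" using metric by (simp add: left_inv_metric_def)

lemma d_mult: "d e (gm g h) \<le> d e g + d e h"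
proof -
  have "d g (gm g h) = d e h" using d_left[of g e h] by (simp add: rid)
  then show ?thesis using d_tri[of e "gm g h" g] by simp
qed

end



context ts begin

lemma phi_meas:
  "f \<in> borel_measurable M \<Longrightarrow> (\<lambda>z. f (a (ginv (snd z)) (fst z))) \<in> borel_measurable (M \<Otimes>\<^sub>M mG)"
  by (rule measurable_compose[OF actI_meas2])

lemma phi_meas':
  "f \<in> borel_measurable M \<Longrightarrow> (\<lambda>z. f (a (ginv (fst z)) (snd z))) \<in> borel_measurable (mG \<Otimes>\<^sub>M M)"
  by (rule measurable_compose[OF actI_meas])

lemma phi_meas_g:
  "f \<in> borel_measurable M \<Longrightarrow> x \<in> space M \<Longrightarrow> (\<lambda>g. f (a (ginv g) x)) \<in> borel_measurable mG"
  by (rule measurable_compose[OF actI_meas_g])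

lemma pi_meas:
  assumes f[measurable]: "f \<in> borel_measurable M" and t: "0 < t"
  shows "(\<lambda>x. pi_beta a ginv mG d e t f x) \<in> borel_measurable M"
proof -
  interpret mg: sigma_finite_measure mG by (rule sf_mG)
  have [measurable]: "Bt d e t \<in> sets mG" using t by simp
  have "(\<lambda>x. \<integral>g. indicator (Bt d e t) g * f (a (ginv g) x) \<partial>mG) \<in> borel_measurable M"
  proof (rule mg.borel_measurable_lebesgue_integral)
    have "(\<lambda>z. indicator (Bt d e t) (snd z) * f (a (ginv (snd z)) (fst z)) :: real) \<in> borel_measurable (M \<Otimes>\<^sub>M mG)"
      by (intro borel_measurable_times phi_meas[OF f] measurable_compose[OF measurable_snd] borel_measurable_indicator) simp
    then show "(\<lambda>(x, g). indicator (Bt d e t) g * f (a (ginv g) x) :: real) \<in> borel_measurable (M \<Otimes>\<^sub>M mG)"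
      by (simp add: case_prod_beta)
  qed
  then show ?thesis unfolding pi_beta_def by (rule borel_measurable_divide) simp
qed

lemma tonelli_Lp:
  assumes f[measurable]: "f \<in> borel_measurable M" and B[measurable]: "B \<in> sets mG"
  shows "(\<integral>\<^sup>+x. \<integral>\<^sup>+g. indicator B g * ennreal (\<bar>f (a (ginv g) x)\<bar> powr p) \<partial>mG \<partial>M)
       = emeasure mG B * (\<integral>\<^sup>+x. ennreal (\<bar>f x\<bar> powr p) \<partial>M)"
proof -
  interpret pair_sigma_finite mG M by (rule psf)
  have m: "(\<lambda>z. indicator B (fst z) * ennreal (\<bar>f (a (ginv (fst z)) (snd z))\<bar> powr p)) \<in> borel_measurable (mG \<Otimes>\<^sub>M M)"
    by measurable
  have "(\<integral>\<^sup>+x. \<integral>\<^sup>+g. indicator B g * ennreal (\<bar>f (a (ginv g) x)\<bar> powr p) \<partial>mG \<partial>M)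
      = (\<integral>\<^sup>+g. \<integral>\<^sup>+x. indicator B g * ennreal (\<bar>f (a (ginv g) x)\<bar> powr p) \<partial>M \<partial>mG)"
    by (rule Fubini') (use m in \<open>simp add: case_prod_beta\<close>)
  also have "\<dots> = (\<integral>\<^sup>+g. indicator B g * (\<integral>\<^sup>+x. ennreal (\<bar>f x\<bar> powr p) \<partial>M) \<partial>mG)"
  proof (rule nn_integral_cong)
    fix g
    have "(\<integral>\<^sup>+x. indicator B g * ennreal (\<bar>f (a (ginv g) x)\<bar> powr p) \<partial>M)
        = indicator B g * (\<integral>\<^sup>+x. ennreal (\<bar>f (a (ginv g) x)\<bar> powr p) \<partial>M)"
      by (rule nn_integral_cmult) measurable
    also have "(\<integral>\<^sup>+x. ennreal (\<bar>f (a (ginv g) x)\<bar> powr p) \<partial>M) = (\<integral>\<^sup>+x. ennreal (\<bar>f x\<bar> powr p) \<partial>M)"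
      by (rule nn_pres[of "\<lambda>x. ennreal (\<bar>f x\<bar> powr p)"]) measurable
    finally show "(\<integral>\<^sup>+x. indicator B g * ennreal (\<bar>f (a (ginv g) x)\<bar> powr p) \<partial>M)
        = indicator B g * (\<integral>\<^sup>+x. ennreal (\<bar>f x\<bar> powr p) \<partial>M)" .
  qed
  also have "\<dots> = (\<integral>\<^sup>+x. ennreal (\<bar>f x\<bar> powr p) \<partial>M) * emeasure mG B"
    by (subst mult.commute) (rule nn_integral_cmult_indicator[OF B])
  finally show ?thesis by (simp add: mult.commute)
qed

lemma inLp_fin:
  assumes "in_Lp M p f" shows "(\<integral>\<^sup>+x. ennreal (\<bar>f x\<bar> powr p) \<partial>M) < \<infinity>"
proof -
  have "(\<lambda>x. epowr (ennreal \<bar>f x\<bar>) p) = (\<lambda>x. ennreal (\<bar>f x\<bar> powr p))"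
    by (simp add: epowr_ennreal)
  with assms show ?thesis
    by (auto simp: in_Lp_def Lp_norm_def epowr_def less_top[symmetric])
qed

definition Xg where
  "Xg f s = {x \<in> space M. (\<integral>\<^sup>+g. indicator (Bt d e s) g * ennreal (\<bar>f (a (ginv g) x)\<bar> powr p) \<partial>mG) < \<infinity>}"

lemma Xg_sets[measurable]:
  assumes f[measurable]: "f \<in> borel_measurable M" and s: "0 < s"
  shows "Xg f s \<in> sets M"
proof -
  interpret mg: sigma_finite_measure mG by (rule sf_mG)
  have [measurable]: "Bt d e s \<in> sets mG" using s by simp
  have "(\<lambda>z. indicator (Bt d e s) (snd z) * ennreal (\<bar>f (a (ginv (snd z)) (fst z))\<bar> powr p)) \<in> borel_measurable (M \<Otimes>\<^sub>M mG)"
    by measurable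
  then have "(\<lambda>x. \<integral>\<^sup>+g. indicator (Bt d e s) g * ennreal (\<bar>f (a (ginv g) x)\<bar> powr p) \<partial>mG) \<in> borel_measurable M"
    by (intro mg.borel_measurable_nn_integral) (simp add: case_prod_beta)
  then show ?thesis unfolding Xg_def by measurable
qed

lemma AE_Xg:
  assumes f: "in_Lp M p f" and s: "0 < s"
  shows "AE x in M. x \<in> Xg f s"
proof -
  interpret mg: sigma_finite_measure mG by (rule sf_mG)
  have fm[measurable]: "f \<in> borel_measurable M" using f by (simp add: in_Lp_def)
  have [measurable]: "Bt d e s \<in> sets mG" using s by simp
  have "(\<lambda>z. indicator (Bt d e s) (snd z) * ennreal (\<bar>f (a (ginv (snd z)) (fst z))\<bar> powr p)) \<in> borel_measurable (M \<Otimes>\<^sub>M mG)"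
    by measurable
  then have m: "(\<lambda>x. \<integral>\<^sup>+g. indicator (Bt d e s) g * ennreal (\<bar>f (a (ginv g) x)\<bar> powr p) \<partial>mG) \<in> borel_measurable M"
    by (intro mg.borel_measurable_nn_integral) (simp add: case_prod_beta)
  have "(\<integral>\<^sup>+x. \<integral>\<^sup>+g. indicator (Bt d e s) g * ennreal (\<bar>f (a (ginv g) x)\<bar> powr p) \<partial>mG \<partial>M) \<noteq> \<infinity>"
    using tonelli_Lp[OF fm, of "Bt d e s"] s Bt_fin[OF s] inLp_fin[OF f]
    by (simp add: ennreal_mult_eq_top_iff less_top)
  from nn_integral_PInf_AE[OF m this] show ?thesis
    unfolding Xg_def by (auto simp: less_top)
qed

lemma abs_le_powr: "1 \<le> q \<Longrightarrow> \<bar>y::real\<bar> \<le> 1 + \<bar>y\<bar> powr q"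
proof (cases "\<bar>y\<bar> \<le> 1")
  case True then show ?thesis by (simp add: add_increasing2)
next
  case False
  assume q: "1 \<le> q"
  then have "\<bar>y\<bar> powr 1 \<le> \<bar>y\<bar> powr q" using False by (intro powr_mono) auto
  then show ?thesis using False by simp
qed

lemma Xg_integrable:
  assumes f[measurable]: "f \<in> borel_measurable M" and s: "0 < s" and x: "x \<in> Xg f s"
  shows "integrable mG (\<lambda>g. indicator (Bt d e s) g * f (a (ginv g) x))"
proof (rule integrableI_bounded)
  have xs: "x \<in> space M" using x by (simp add: Xg_def)
  have [measurable]: "Bt d e s \<in> sets mG" using s by simp
  show "(\<lambda>g. indicator (Bt d e s) g * f (a (ginv g) x)) \<in> borel_measurable mG"
    using xs by measurable
  have "(\<integral>\<^sup>+g. ennreal (norm (indicator (Bt d e s) g * f (a (ginv g) x))) \<partial>mG)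
     \<le> (\<integral>\<^sup>+g. indicator (Bt d e s) g + indicator (Bt d e s) g * ennreal (\<bar>f (a (ginv g) x)\<bar> powr p) \<partial>mG)"
  proof (rule nn_integral_mono)
    fix g
    show "ennreal (norm (indicator (Bt d e s) g * f (a (ginv g) x)))
      \<le> indicator (Bt d e s) g + indicator (Bt d e s) g * ennreal (\<bar>f (a (ginv g) x)\<bar> powr p)"
    proof (cases "g \<in> Bt d e s")
      case True
      have "ennreal \<bar>f (a (ginv g) x)\<bar> \<le> ennreal (1 + \<bar>f (a (ginv g) x)\<bar> powr p)"
        using abs_le_powr[of p "f (a (ginv g) x)"] p by (intro ennreal_leI) simp
      also have "\<dots> = 1 + ennreal (\<bar>f (a (ginv g) x)\<bar> powr p)"
        by (subst ennreal_plus) auto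
      finally show ?thesis using True by simp
    qed simp
  qed
  also have "\<dots> = emeasure mG (Bt d e s) + (\<integral>\<^sup>+g. indicator (Bt d e s) g * ennreal (\<bar>f (a (ginv g) x)\<bar> powr p) \<partial>mG)"
    using xs by (subst nn_integral_add) auto
  also have "\<dots> < \<infinity>" using x Bt_fin[OF s] by (simp add: Xg_def)
  finally show "(\<integral>\<^sup>+g. ennreal (norm (indicator (Bt d e s) g * f (a (ginv g) x))) \<partial>mG) < \<infinity>" .
qed

end



context ts begin

definition Tsup where
  "Tsup f s x = (SUP t\<in>{0<..s}. ennreal \<bar>pi_beta a ginv mG d e t f x\<bar>)"

definition Dset :: "real \<Rightarrow> real set" where
  "Dset s = insert s ({0<..<s} \<inter> \<rat>)"

definition Tp where
  "Tp f s x = (if x \<in> Xg f s then (SUP t\<in>Dset s. ennreal \<bar>pi_beta a ginv mG d e t f x\<bar>) else 0)"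

lemma Dset_sub: "0 < s \<Longrightarrow> Dset s \<subseteq> {0<..s}"
  by (auto simp: Dset_def)

lemma Dset_countable: "countable (Dset s)"
  unfolding Dset_def by (intro countable_insert countable_Int2 countable_rat)

lemma dom_conv:
  fixes psi :: "'g \<Rightarrow> real"
  assumes psi[measurable]: "psi \<in> borel_measurable mG"
    and int: "integrable mG (\<lambda>g. indicator (Bt d e s) g * psi g)"
    and t0: "0 < t0" "t0 < s" and q: "\<And>n. t0 < q n \<and> q n \<le> s" and lim: "q \<longlonglongrightarrow> t0"
  shows "(\<lambda>n. \<integral>g. indicator (Bt d e (q n)) g * psi g \<partial>mG) \<longlonglongrightarrow> (\<integral>g. indicator (Bt d e t0) g * psi g \<partial>mG)"
proof (rule integral_dominated_convergence[where w="\<lambda>g. \<bar>indicator (Bt d e s) g * psi g\<bar>"])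
  have [measurable]: "Bt d e t0 \<in> sets mG" using t0 by simp
  show "(\<lambda>g. indicator (Bt d e t0) g * psi g) \<in> borel_measurable mG" by measurable
  show "(\<lambda>g. indicator (Bt d e (q n)) g * psi g) \<in> borel_measurable mG" for n
  proof -
    have [measurable]: "Bt d e (q n) \<in> sets mG" using t0 q[of n] by simp
    show ?thesis by measurable
  qed
  show "integrable mG (\<lambda>g. \<bar>indicator (Bt d e s) g * psi g\<bar>)" using int by (rule integrable_abs)
  show "AE g in mG. (\<lambda>n. indicator (Bt d e (q n)) g * psi g) \<longlonglongrightarrow> indicator (Bt d e t0) g * psi g"
  proof (rule AE_I2, rule tendsto_eventually)
    fix g
    show "\<forall>\<^sub>F n in sequentially. indicator (Bt d e (q n)) g * psi g = indicator (Bt d e t0) g * psi g"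
    proof (cases "d e g \<le> t0")
      case True
      then have "\<And>n. d e g \<le> q n" using q by (meson less_imp_le order_trans)
      then show ?thesis using True by (auto simp: Bt_def)
    next
      case False
      then have "\<forall>\<^sub>F n in sequentially. q n < d e g" using lim by (intro order_tendstoD(2)) auto
      then show ?thesis
      proof (rule eventually_mono)
        fix n assume "q n < d e g"
        then show "indicator (Bt d e (q n)) g * psi g = indicator (Bt d e t0) g * psi g"
          using False by (auto simp: Bt_def)
      qed
    qed
  qed
  show "AE g in mG. norm (indicator (Bt d e (q n)) g * psi g) \<le> \<bar>indicator (Bt d e s) g * psi g\<bar>" for n
  proof (rule AE_I2)
    fix g
    have "Bt d e (q n) \<subseteq> Bt d e s" using q[of n] by (rule Bt_mono[OF conjunct2])
    then show "norm (indicator (Bt d e (q n)) g * psi g) \<le> \<bar>indicator (Bt d e s) g * psi g\<bar>"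
      by (auto simp: indicator_def)
  qed
qed

lemma pi_rc:
  assumes f[measurable]: "f \<in> borel_measurable M" and s: "0 < s" and x: "x \<in> Xg f s"
    and t0: "0 < t0" "t0 < s" and q: "\<And>n. t0 < q n \<and> q n \<le> s" and lim: "q \<longlonglongrightarrow> t0"
  shows "(\<lambda>n. pi_beta a ginv mG d e (q n) f x) \<longlonglongrightarrow> pi_beta a ginv mG d e t0 f x"
proof -
  have xs: "x \<in> space M" using x by (simp add: Xg_def)
  have num: "(\<lambda>n. \<integral>g. indicator (Bt d e (q n)) g * f (a (ginv g) x) \<partial>mG) \<longlonglongrightarrow> (\<integral>g. indicator (Bt d e t0) g * f (a (ginv g) x) \<partial>mG)"
    by (rule dom_conv[OF phi_meas_g[OF f xs] Xg_integrable[OF f s x] t0 q lim])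
  have [measurable]: "Bt d e s \<in> sets mG" using s by simp
  have int1: "integrable mG (\<lambda>g. indicator (Bt d e s) g * (1::real))"
    using Bt_fin[OF s] by simp
  have den0: "(\<lambda>n. \<integral>g. indicator (Bt d e (q n)) g * (1::real) \<partial>mG) \<longlonglongrightarrow> (\<integral>g. indicator (Bt d e t0) g * 1 \<partial>mG)"
    by (rule dom_conv[OF _ int1 t0 q lim]) simp
  have den: "(\<lambda>n. measure mG (Bt d e (q n))) \<longlonglongrightarrow> measure mG (Bt d e t0)"
    using den0 by simp
  have "measure mG (Bt d e t0) \<noteq> 0" using Bt_pos[OF t0(1)] by simp
  from tendsto_divide[OF num den this] show ?thesis unfolding pi_beta_def .
qed

lemma T_le_Tp:
  assumes f[measurable]: "f \<in> borel_measurable M" and s: "0 < s" and x: "x \<in> Xg f s"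
  shows "Tsup f s x \<le> Tp f s x"
  unfolding Tsup_def Tp_def using x
proof (simp, intro SUP_least)
  fix t0 assume t0: "t0 \<in> {0<..s}"
  let ?S = "(SUP t\<in>Dset s. ennreal \<bar>pi_beta a ginv mG d e t f x\<bar>)"
  show "ennreal \<bar>pi_beta a ginv mG d e t0 f x\<bar> \<le> ?S"
  proof (cases "t0 = s")
    case True
    then show ?thesis by (intro SUP_upper) (simp add: Dset_def)
  next
    case False
    then have t0': "0 < t0" "t0 < s" using t0 by auto
    have "\<forall>n. \<exists>r. r \<in> \<rat> \<and> t0 < r \<and> r < min s (t0 + 1 / real (Suc n))"
    proof
      fix n
      have "t0 < min s (t0 + 1 / real (Suc n))" using t0' by simp
      from Rats_dense_in_real[OF this] show "\<exists>r. r \<in> \<rat> \<and> t0 < r \<and> r < min s (t0 + 1 / real (Suc n))"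
        by blast
    qed
    from choice[OF this] obtain q where q: "\<And>n. q n \<in> \<rat> \<and> t0 < q n \<and> q n < min s (t0 + 1 / real (Suc n))"
      by blast
    have qD: "q n \<in> Dset s" for n using q[of n] t0' by (auto simp: Dset_def)
    have q2: "t0 < q n \<and> q n \<le> s" for n using q[of n] by auto
    have lim: "q \<longlonglongrightarrow> t0"
    proof (rule tendsto_sandwich[where f="\<lambda>_. t0" and h="\<lambda>n. t0 + 1 / real (Suc n)"])
      show "\<forall>\<^sub>F n in sequentially. t0 \<le> q n" using q2 by (simp add: less_imp_le)
      show "\<forall>\<^sub>F n in sequentially. q n \<le> t0 + 1 / real (Suc n)" using q by (simp add: less_imp_le)
      show "(\<lambda>_. t0) \<longlonglongrightarrow> t0" by simp
      have "(\<lambda>n. 1 / real (Suc n)) \<longlonglongrightarrow> 0" using LIMSEQ_Suc[OF lim_1_over_n] by simp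
      from tendsto_add[OF tendsto_const this] show "(\<lambda>n. t0 + 1 / real (Suc n)) \<longlonglongrightarrow> t0" by simp
    qed
    have "(\<lambda>n. ennreal \<bar>pi_beta a ginv mG d e (q n) f x\<bar>) \<longlonglongrightarrow> ennreal \<bar>pi_beta a ginv mG d e t0 f x\<bar>"
      by (intro tendsto_ennrealI tendsto_rabs pi_rc[OF f s x t0' q2 lim])
    then show ?thesis
    proof (rule LIMSEQ_le_const2)
      show "\<exists>N. \<forall>n\<ge>N. ennreal \<bar>pi_beta a ginv mG d e (q n) f x\<bar> \<le> ?S"
        using qD by (intro exI[of _ 0] allI impI SUP_upper) auto
    qed
  qed
qed

lemma Tp_le_T:
  assumes s: "0 < s" shows "Tp f s x \<le> Tsup f s x"
  unfolding Tsup_def Tp_def using Dset_sub[OF s] by (auto intro: SUP_subset_mono)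

lemma Tp_meas:
  assumes f[measurable]: "f \<in> borel_measurable M" and s: "0 < s"
  shows "Tp f s \<in> borel_measurable M"
proof -
  have "(\<lambda>x. SUP t\<in>Dset s. ennreal \<bar>pi_beta a ginv mG d e t f x\<bar>) \<in> borel_measurable M"
  proof (rule borel_measurable_SUP[OF Dset_countable])
    fix t assume "t \<in> Dset s"
    then have t: "0 < t" using Dset_sub[OF s] by auto
    have [measurable]: "(\<lambda>x. pi_beta a ginv mG d e t f x) \<in> borel_measurable M" by (rule pi_meas[OF f t])
    show "(\<lambda>x. ennreal \<bar>pi_beta a ginv mG d e t f x\<bar>) \<in> borel_measurable M" by measurable
  qed
  moreover have "Xg f s \<inter> space M \<in> sets M" using Xg_sets[OF f s] by simp
  ultimately have "(\<lambda>x. if x \<in> Xg f s then (SUP t\<in>Dset s. ennreal \<bar>pi_beta a ginv mG d e t f x\<bar>) else 0) \<in> borel_measurable M"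
    by (intro measurable_If_set) auto
  then show ?thesis unfolding Tp_def[abs_def] .
qed

lemma AE_T_eq:
  assumes f: "in_Lp M p f" and s: "0 < s"
  shows "AE x in M. Tsup f s x = Tp f s x"
proof -
  have fm: "f \<in> borel_measurable M" using f by (simp add: in_Lp_def)
  from AE_Xg[OF f s] show ?thesis
  proof (rule AE_mp, intro AE_I2 impI)
    fix x assume "x \<in> Xg f s"
    then show "Tsup f s x = Tp f s x" using T_le_Tp[OF fm s] Tp_le_T[OF s] by (auto intro: antisym)
  qed
qed

end



lemma div_ennreal:
  assumes "ennreal m * X \<le> ennreal Y" "0 < m" "0 \<le> Y"
  shows "X \<le> ennreal (Y / m)"
proof -
  have "X \<noteq> \<infinity>"
  proof
    assume "X = \<infinity>"
    then have "ennreal m * X = \<infinity>" using assms(2) by (simp add: ennreal_mult_eq_top_iff)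
    then show False using assms(1) by (simp add: top_unique)
  qed
  then obtain x where x: "X = ennreal x" "0 \<le> x" by (rule fin_cases)
  have "m * x \<le> Y" using assms x by (simp add: ennreal_mult'[symmetric] ennreal_le_iff)
  then have "x \<le> Y / m" using assms(2) by (simp add: field_simps)
  then show ?thesis using x by (simp add: ennreal_leI)
qed

context ts begin

lemma Gx_meas:
  assumes f[measurable]: "f \<in> borel_measurable M" and s: "0 < s"
  shows "(\<lambda>x. \<integral>\<^sup>+g. indicator (Bt d e s) g * ennreal (\<bar>f (a (ginv g) x)\<bar> powr p) \<partial>mG) \<in> borel_measurable M"
proof -
  interpret mg: sigma_finite_measure mG by (rule sf_mG)
  have [measurable]: "Bt d e s \<in> sets mG" using s by simp
  have "(\<lambda>z. indicator (Bt d e s) (snd z) * ennreal (\<bar>f (a (ginv (snd z)) (fst z))\<bar> powr p)) \<in> borel_measurable (M \<Otimes>\<^sub>M mG)"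
    by measurable
  then show ?thesis
    by (intro mg.borel_measurable_nn_integral) (simp add: case_prod_beta)
qed

lemma pi_rho:
  assumes x: "x \<in> space M" and g: "d e g \<le> R - r" and t: "0 < t" "t \<le> r"
  shows "pi_beta a ginv mG d e t f (a (ginv g) x)
       = rho_beta gm mG d e t (\<lambda>k. indicator (Bt d e R) k * f (a (ginv k) x)) g"
  unfolding pi_beta_def rho_beta_def
proof (intro arg_cong2[where f="(/)"] refl Bochner_Integration.integral_cong)
  fix h
  show "indicator (Bt d e t) h * f (a (ginv h) (a (ginv g) x))
      = indicator (Bt d e t) h * (indicator (Bt d e R) (gm g h) * f (a (ginv (gm g h)) x))"
  proof (cases "h \<in> Bt d e t")
    case True
    then have "d e h \<le> r" using t by (simp add: Bt_def)
    then have "d e (gm g h) \<le> R" using d_mult[of g h] g by simp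
    then have "gm g h \<in> Bt d e R" by (simp add: Bt_def)
    moreover have "a (ginv h) (a (ginv g) x) = a (ginv (gm g h)) x"
      using a_mult[OF x, of "ginv h" "ginv g"] by (simp add: ginv_mult)
    ultimately show ?thesis by simp
  qed simp
qed

lemma part1_int:
  assumes f: "in_Lp M p f" and r: "0 < r" and R: "2 * r \<le> R" and H: "local_max_ineq gm mG d e p C r"
  shows "(\<integral>\<^sup>+x. epowr (Tsup f r x) p \<partial>M)
     \<le> ennreal (max C 0 powr p * (measure mG (Bt d e R) / measure mG (Bt d e (R - r)))
               * enn2real (\<integral>\<^sup>+x. ennreal (\<bar>f x\<bar> powr p) \<partial>M))"
proof -
  interpret pair_sigma_finite mG M by (rule psf)
  have fm[measurable]: "f \<in> borel_measurable M" using f by (simp add: in_Lp_def)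
  define Jn where "Jn = (\<integral>\<^sup>+x. ennreal (\<bar>f x\<bar> powr p) \<partial>M)"
  define J where "J = enn2real Jn"
  have Jfin: "Jn < \<infinity>" unfolding Jn_def by (rule inLp_fin[OF f])
  have JJ: "Jn = ennreal J" "0 \<le> J" using Jfin unfolding J_def by (auto simp: less_top ennreal_enn2real_if)
  have R1: "0 < R - r" and R2: "0 < R" using r R by auto
  define B1 where "B1 = Bt d e (R - r)"
  define B2 where "B2 = Bt d e R"
  have B1s[measurable]: "B1 \<in> sets mG" and B2s[measurable]: "B2 \<in> sets mG"
    using R1 R2 by (simp_all add: B1_def B2_def)
  define m1 where "m1 = measure mG B1"
  define m2 where "m2 = measure mG B2"
  have m1pos: "0 < m1" using Bt_pos[OF R1] by (simp add: m1_def B1_def)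
  have m2pos: "0 \<le> m2" by (simp add: m2_def)
  have eB1: "emeasure mG B1 = ennreal m1" using Bt_emeasure[OF R1] by (simp add: m1_def B1_def)
  have eB2: "emeasure mG B2 = ennreal m2" using Bt_emeasure[OF R2] by (simp add: m2_def B2_def)
  define Cp where "Cp = max C 0 powr p"
  have Cp0: "0 \<le> Cp" by (simp add: Cp_def)
  define Phi where "Phi x = epowr (Tp f r x) p" for x
  have Phim[measurable]: "Phi \<in> borel_measurable M"
    unfolding Phi_def[abs_def] by (intro epowr_measurable Tp_meas[OF fm r])
  define Fx where "Fx x = (\<lambda>k. indicator B2 k * f (a (ginv k) x))" for x
  define Gx where "Gx x = (\<integral>\<^sup>+g. indicator B2 g * ennreal (\<bar>f (a (ginv g) x)\<bar> powr p) \<partial>mG)" for x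
  have Gxm[measurable]: "Gx \<in> borel_measurable M"
    unfolding Gx_def[abs_def] B2_def by (rule Gx_meas[OF fm R2])
  have intG: "(\<integral>\<^sup>+x. Gx x \<partial>M) = ennreal m2 * Jn"
    unfolding Gx_def Jn_def using tonelli_Lp[OF fm B2s] eB2 by simp

  have A: "(\<integral>\<^sup>+x. epowr (Tsup f r x) p \<partial>M) = (\<integral>\<^sup>+x. Phi x \<partial>M)"
  proof (rule nn_integral_cong_AE)
    from AE_T_eq[OF f r] show "AE x in M. epowr (Tsup f r x) p = Phi x"
      by (rule AE_mp) (simp add: Phi_def)
  qed
  have B: "ennreal m1 * (\<integral>\<^sup>+x. Phi x \<partial>M) = (\<integral>\<^sup>+g. \<integral>\<^sup>+x. indicator B1 g * Phi (a (ginv g) x) \<partial>M \<partial>mG)"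
  proof -
    have "(\<integral>\<^sup>+g. \<integral>\<^sup>+x. indicator B1 g * Phi (a (ginv g) x) \<partial>M \<partial>mG)
        = (\<integral>\<^sup>+g. (\<integral>\<^sup>+x. Phi x \<partial>M) * indicator B1 g \<partial>mG)"
    proof (rule nn_integral_cong)
      fix g
      have m: "(\<lambda>x. Phi (a (ginv g) x)) \<in> borel_measurable M"
        by (rule measurable_compose[OF a_meas Phim])
      have "(\<integral>\<^sup>+x. indicator B1 g * Phi (a (ginv g) x) \<partial>M) = indicator B1 g * (\<integral>\<^sup>+x. Phi (a (ginv g) x) \<partial>M)"
        by (rule nn_integral_cmult[OF m])
      also have "(\<integral>\<^sup>+x. Phi (a (ginv g) x) \<partial>M) = (\<integral>\<^sup>+x. Phi x \<partial>M)"
        by (rule nn_pres[OF Phim])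
      finally show "(\<integral>\<^sup>+x. indicator B1 g * Phi (a (ginv g) x) \<partial>M) = (\<integral>\<^sup>+x. Phi x \<partial>M) * indicator B1 g"
        by (simp add: mult.commute)
    qed
    also have "\<dots> = (\<integral>\<^sup>+x. Phi x \<partial>M) * emeasure mG B1"
      by (rule nn_integral_cmult_indicator[OF B1s])
    finally show ?thesis using eB1 by (simp add: mult.commute)
  qed
  have C: "(\<integral>\<^sup>+g. \<integral>\<^sup>+x. indicator B1 g * Phi (a (ginv g) x) \<partial>M \<partial>mG)
         = (\<integral>\<^sup>+x. \<integral>\<^sup>+g. indicator B1 g * Phi (a (ginv g) x) \<partial>mG \<partial>M)"
  proof (rule Fubini'[symmetric])
    have "(\<lambda>z. indicator B1 (fst z) * Phi (a (ginv (fst z)) (snd z))) \<in> borel_measurable (mG \<Otimes>\<^sub>M M)"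
      by measurable
    then show "(\<lambda>(g, x). indicator B1 g * Phi (a (ginv g) x)) \<in> borel_measurable (mG \<Otimes>\<^sub>M M)"
      by (simp add: case_prod_beta)
  qed
  have D: "(\<integral>\<^sup>+x. \<integral>\<^sup>+g. indicator B1 g * Phi (a (ginv g) x) \<partial>mG \<partial>M) \<le> (\<integral>\<^sup>+x. ennreal Cp * Gx x \<partial>M)"
  proof (rule nn_integral_mono_AE)
    from AE_Xg[OF f R2] show "AE x in M. (\<integral>\<^sup>+g. indicator B1 g * Phi (a (ginv g) x) \<partial>mG) \<le> ennreal Cp * Gx x"
    proof (rule AE_mp, intro AE_I2 impI)
      fix x assume xX: "x \<in> Xg f R" and x: "x \<in> space M"
      have Gfin: "Gx x < \<infinity>" using xX by (simp add: Xg_def Gx_def B2_def)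
      have FG: "(\<integral>\<^sup>+g. epowr (ennreal \<bar>Fx x g\<bar>) p \<partial>mG) = Gx x"
        unfolding Gx_def Fx_def
        by (intro nn_integral_cong) (auto simp: epowr_ennreal indicator_def)
      have Fm: "Fx x \<in> borel_measurable mG"
        unfolding Fx_def using phi_meas_g[OF fm x] by measurable
      have inF: "in_Lp mG p (Fx x)"
        unfolding in_Lp_def Lp_norm_def using Fm Gfin FG
        by (auto simp: epowr_def less_top[symmetric])
      have HF: "Lp_norm mG p (\<lambda>g. SUP t\<in>{0<..r}. ennreal \<bar>rho_beta gm mG d e t (Fx x) g\<bar>)
          \<le> ennreal C * Lp_norm mG p (\<lambda>g. ennreal \<bar>Fx x g\<bar>)"
        using H inF by (simp add: local_max_ineq_def)
      have HF2: "(\<integral>\<^sup>+g. epowr (SUP t\<in>{0<..r}. ennreal \<bar>rho_beta gm mG d e t (Fx x) g\<bar>) p \<partial>mG)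
          \<le> ennreal Cp * Gx x"
        using conv_back[OF HF[unfolded Lp_norm_def]] Gfin FG p by (simp add: Cp_def)
      have "(\<integral>\<^sup>+g. indicator B1 g * Phi (a (ginv g) x) \<partial>mG)
          \<le> (\<integral>\<^sup>+g. epowr (SUP t\<in>{0<..r}. ennreal \<bar>rho_beta gm mG d e t (Fx x) g\<bar>) p \<partial>mG)"
      proof (rule nn_integral_mono)
        fix g
        show "indicator B1 g * Phi (a (ginv g) x)
            \<le> epowr (SUP t\<in>{0<..r}. ennreal \<bar>rho_beta gm mG d e t (Fx x) g\<bar>) p"
        proof (cases "g \<in> B1")
          case True
          then have gd: "d e g \<le> R - r" by (simp add: B1_def Bt_def)
          have "Tsup f r (a (ginv g) x) = (SUP t\<in>{0<..r}. ennreal \<bar>rho_beta gm mG d e t (Fx x) g\<bar>)"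
            unfolding Tsup_def Fx_def B2_def
            by (intro SUP_cong refl) (simp add: pi_rho[OF x gd])
          moreover have "Phi (a (ginv g) x) \<le> epowr (Tsup f r (a (ginv g) x)) p"
            unfolding Phi_def using p by (intro epowr_mono Tp_le_T r) simp
          ultimately show ?thesis using True by simp
        qed simp
      qed
      also note HF2
      finally show "(\<integral>\<^sup>+g. indicator B1 g * Phi (a (ginv g) x) \<partial>mG) \<le> ennreal Cp * Gx x" .
    qed
  qed
  have E: "(\<integral>\<^sup>+x. ennreal Cp * Gx x \<partial>M) = ennreal (Cp * m2 * J)"
    using intG JJ Cp0 m2pos by (simp add: nn_integral_cmult ennreal_mult'[symmetric] mult.assoc)
  have "ennreal m1 * (\<integral>\<^sup>+x. Phi x \<partial>M) \<le> ennreal (Cp * m2 * J)"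
    using B C D E by simp
  then have "(\<integral>\<^sup>+x. Phi x \<partial>M) \<le> ennreal (Cp * m2 * J / m1)"
    using m1pos Cp0 m2pos JJ by (intro div_ennreal) auto
  then show ?thesis
    using A by (simp add: Cp_def m1_def m2_def B1_def B2_def J_def Jn_def)
qed

end



context ts begin

lemma part1_lim:
  assumes f: "in_Lp M p f" and s: "0 < s"
    and lim: "((\<lambda>R. measure mG (Bt d e R) / measure mG (Bt d e (R - s))) \<longlongrightarrow> 1) at_top"
    and H: "local_max_ineq gm mG d e p C s"
  shows "(\<integral>\<^sup>+x. epowr (Tsup f s x) p \<partial>M)
     \<le> ennreal (max C 0 powr p * enn2real (\<integral>\<^sup>+x. ennreal (\<bar>f x\<bar> powr p) \<partial>M))"
proof -
  define J where "J = enn2real (\<integral>\<^sup>+x. ennreal (\<bar>f x\<bar> powr p) \<partial>M)"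
  define Cp where "Cp = max C 0 powr p"
  define rat where "rat R = measure mG (Bt d e R) / measure mG (Bt d e (R - s))" for R
  have J0: "0 \<le> J" by (simp add: J_def)
  have Cp0: "0 \<le> Cp" by (simp add: Cp_def)
  have rat0: "0 \<le> rat R" for R by (simp add: rat_def)
  have bnd: "(\<integral>\<^sup>+x. epowr (Tsup f s x) p \<partial>M) \<le> ennreal (Cp * rat R * J)" if "2 * s \<le> R" for R
    using part1_int[OF f s that H] by (simp add: Cp_def rat_def J_def)
  have "(\<integral>\<^sup>+x. epowr (Tsup f s x) p \<partial>M) \<noteq> \<infinity>"
    using bnd[of "2 * s"] by (auto simp: top_unique)
  then obtain v where v: "(\<integral>\<^sup>+x. epowr (Tsup f s x) p \<partial>M) = ennreal v" "0 \<le> v" by (rule fin_cases)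
  have vle: "v \<le> Cp * rat R * J" if "2 * s \<le> R" for R
    using bnd[OF that] v rat0[of R] Cp0 J0 by (simp add: ennreal_le_iff)
  have "v \<le> Cp * 1 * J"
  proof (rule tendsto_le[where F=at_top])
    show "\<not> trivial_limit (at_top :: real filter)" by simp
    show "((\<lambda>_. v) \<longlongrightarrow> v) at_top" by simp
    show "((\<lambda>R. Cp * rat R * J) \<longlongrightarrow> Cp * 1 * J) at_top"
      using lim unfolding rat_def[abs_def] by (intro tendsto_mult tendsto_const) auto
    show "\<forall>\<^sub>F R in at_top. v \<le> Cp * rat R * J"
      using vle by (auto simp: eventually_at_top_linorder)
  qed
  then show ?thesis using v by (simp add: Cp_def J_def ennreal_leI)
qed

lemma part2_int:
  assumes f: "in_Lp M p f"
    and lim: "\<forall>s>0. ((\<lambda>R. measure mG (Bt d e R) / measure mG (Bt d e (R - s))) \<longlongrightarrow> 1) at_top"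
    and H: "\<forall>s>0. local_max_ineq gm mG d e p C s"
  shows "(\<integral>\<^sup>+x. epowr (SUP t\<in>{0<..}. ennreal \<bar>pi_beta a ginv mG d e t f x\<bar>) p \<partial>M)
     \<le> ennreal (max C 0 powr p * enn2real (\<integral>\<^sup>+x. ennreal (\<bar>f x\<bar> powr p) \<partial>M))"
proof -
  define K where "K = ennreal (max C 0 powr p * enn2real (\<integral>\<^sup>+x. ennreal (\<bar>f x\<bar> powr p) \<partial>M))"
  have fm: "f \<in> borel_measurable M" using f by (simp add: in_Lp_def)
  have pos: "0 < real (Suc n)" for n by simp
  have un: "{0::real<..} = (\<Union>n. {0<..real (Suc n)})"
  proof (intro set_eqI iffI)
    fix t :: real assume t: "t \<in> {0<..}"
    obtain n :: nat where "t \<le> real n" using real_arch_simple by blast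
    then show "t \<in> (\<Union>n. {0<..real (Suc n)})" using t by (intro UN_I[of n]) auto
  next
    fix t :: real assume "t \<in> (\<Union>n. {0<..real (Suc n)})"
    then show "t \<in> {0<..}" by auto
  qed
  have Tinf: "(SUP t\<in>{0<..}. ennreal \<bar>pi_beta a ginv mG d e t f x\<bar>) = (SUP n. Tsup f (real (Suc n)) x)" for x
    unfolding Tsup_def apply (subst un) apply (simp only: SUP_UNION) done
  have AEall: "AE x in M. \<forall>n. Tsup f (real (Suc n)) x = Tp f (real (Suc n)) x"
    by (subst AE_all_countable) (intro allI AE_T_eq[OF f pos])
  have "(\<integral>\<^sup>+x. epowr (SUP t\<in>{0<..}. ennreal \<bar>pi_beta a ginv mG d e t f x\<bar>) p \<partial>M)
      = (\<integral>\<^sup>+x. epowr (SUP n. Tp f (real (Suc n)) x) p \<partial>M)"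
    unfolding Tinf by (rule nn_integral_cong_AE) (rule AE_mp[OF AEall], simp)
  also have "\<dots> \<le> (\<integral>\<^sup>+x. (SUP n. epowr (Tp f (real (Suc n)) x) p) \<partial>M)"
    using p by (intro nn_integral_mono epowr_SUP_le) simp
  also have "\<dots> = (SUP n. \<integral>\<^sup>+x. epowr (Tp f (real (Suc n)) x) p \<partial>M)"
  proof (rule nn_integral_monotone_convergence_SUP_AE)
    fix n
    show "(\<lambda>x. epowr (Tp f (real (Suc n)) x) p) \<in> borel_measurable M"
      by (intro epowr_measurable Tp_meas[OF fm pos])
    show "AE x in M. epowr (Tp f (real (Suc n)) x) p \<le> epowr (Tp f (real (Suc (Suc n))) x) p"
    proof (rule AE_mp[OF AEall], intro AE_I2 impI)
      fix x assume eq: "\<forall>n. Tsup f (real (Suc n)) x = Tp f (real (Suc n)) x"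
      have mono: "Tsup f (real (Suc n)) x \<le> Tsup f (real (Suc (Suc n))) x"
        unfolding Tsup_def by (rule SUP_subset_mono) auto
      have p0: "0 < p" using p by simp
      show "epowr (Tp f (real (Suc n)) x) p \<le> epowr (Tp f (real (Suc (Suc n))) x) p"
        by (rule epowr_mono[OF _ p0]) (subst eq[rule_format, of n, symmetric], subst eq[rule_format, of "Suc n", symmetric], rule mono)
    qed
  qed
  also have "\<dots> \<le> K"
  proof (rule SUP_least)
    fix n :: nat
    have "(\<integral>\<^sup>+x. epowr (Tp f (real (Suc n)) x) p \<partial>M) = (\<integral>\<^sup>+x. epowr (Tsup f (real (Suc n)) x) p \<partial>M)"
      by (rule nn_integral_cong_AE) (rule AE_mp[OF AE_T_eq[OF f pos[of n]]], simp)
    also have "\<dots> \<le> K"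
      unfolding K_def using lim H pos[of n] by (intro part1_lim[OF f pos]) auto
    finally show "(\<integral>\<^sup>+x. epowr (Tp f (real (Suc n)) x) p \<partial>M) \<le> K" .
  qed
  finally show ?thesis unfolding K_def .
qed

lemma final:
  assumes r: "0 < r" "local_max_ineq gm mG d e p C r"
  shows "\<forall>f R. in_Lp M p f \<and> 2 * r \<le> R \<longrightarrow>
               Lp_norm M p (\<lambda>x. SUP t\<in>{0<..r}. ennreal \<bar>pi_beta a ginv mG d e t f x\<bar>)
                 \<le> ennreal (C * (measure mG (Bt d e R) / measure mG (Bt d e (R - r))) powr (1/p))
                    * Lp_norm M p (\<lambda>x. ennreal \<bar>f x\<bar>)"
proof (intro allI impI, elim conjE)
  fix f R assume f: "in_Lp M p f" and R: "2 * r \<le> R"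
  have Jfin: "(\<integral>\<^sup>+x. ennreal (\<bar>f x\<bar> powr p) \<partial>M) < \<infinity>" by (rule inLp_fin[OF f])
  have JJ: "(\<integral>\<^sup>+x. epowr (ennreal \<bar>f x\<bar>) p \<partial>M) = ennreal (enn2real (\<integral>\<^sup>+x. ennreal (\<bar>f x\<bar> powr p) \<partial>M))"
    using Jfin by (simp add: epowr_ennreal less_top ennreal_enn2real_if)
  show "Lp_norm M p (\<lambda>x. SUP t\<in>{0<..r}. ennreal \<bar>pi_beta a ginv mG d e t f x\<bar>)
       \<le> ennreal (C * (measure mG (Bt d e R) / measure mG (Bt d e (R - r))) powr (1/p))
         * Lp_norm M p (\<lambda>x. ennreal \<bar>f x\<bar>)"
    unfolding Lp_norm_def JJ
    using part1_int[OF f r(1) R r(2)] p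
    by (intro conv) (simp_all add: Tsup_def)
qed

lemma final2:
  assumes "\<forall>s>0. ((\<lambda>R. measure mG (Bt d e R) / measure mG (Bt d e (R - s))) \<longlongrightarrow> 1) at_top"
    and "\<forall>s>0. local_max_ineq gm mG d e p C s"
  shows "\<forall>f. in_Lp M p f \<longrightarrow>
               Lp_norm M p (\<lambda>x. SUP t\<in>{0<..}. ennreal \<bar>pi_beta a ginv mG d e t f x\<bar>)
                 \<le> ennreal C * Lp_norm M p (\<lambda>x. ennreal \<bar>f x\<bar>)"
proof (intro allI impI)
  fix f assume f: "in_Lp M p f"
  have Jfin: "(\<integral>\<^sup>+x. ennreal (\<bar>f x\<bar> powr p) \<partial>M) < \<infinity>" by (rule inLp_fin[OF f])
  have JJ: "(\<integral>\<^sup>+x. epowr (ennreal \<bar>f x\<bar>) p \<partial>M) = ennreal (enn2real (\<integral>\<^sup>+x. ennreal (\<bar>f x\<bar> powr p) \<partial>M))"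
    using Jfin by (simp add: epowr_ennreal less_top ennreal_enn2real_if)
  have "epowr (\<integral>\<^sup>+x. epowr (SUP t\<in>{0<..}. ennreal \<bar>pi_beta a ginv mG d e t f x\<bar>) p \<partial>M) (1/p)
      \<le> ennreal (C * 1 powr (1/p)) * epowr (ennreal (enn2real (\<integral>\<^sup>+x. ennreal (\<bar>f x\<bar> powr p) \<partial>M))) (1/p)"
    using part2_int[OF f assms] p by (intro conv) simp_all
  then show "Lp_norm M p (\<lambda>x. SUP t\<in>{0<..}. ennreal \<bar>pi_beta a ginv mG d e t f x\<bar>)
       \<le> ennreal C * Lp_norm M p (\<lambda>x. ennreal \<bar>f x\<bar>)"
    unfolding Lp_norm_def JJ by simp
qed

end

theorem theorem5p9:
  fixes gm :: "'g::{t2_space,second_countable_topology} \<Rightarrow> 'g \<Rightarrow> 'g"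
    and e :: 'g and ginv :: "'g \<Rightarrow> 'g" and mG :: "'g measure"
    and d :: "'g \<Rightarrow> 'g \<Rightarrow> real" and p C r :: real
    and M :: "'x measure" and a :: "'g \<Rightarrow> 'x \<Rightarrow> 'x"
  assumes G: "lcsc_group gm e ginv" and haar: "unimodular_haar gm mG"
    and metric: "left_inv_metric gm d"
    and balls: "\<forall>t>0. compact (Bt d e t) \<and> emeasure mG (Bt d e t) > 0"
    and p: "1 < p"
    and act: "mp_action gm e mG M a" and sf: "sigma_finite_measure M"
  shows "(0 < r \<and> local_max_ineq gm mG d e p C r \<longrightarrow>
            (\<forall>f R. in_Lp M p f \<and> 2 * r \<le> R \<longrightarrow>
               Lp_norm M p (\<lambda>x. SUP t\<in>{0<..r}. ennreal \<bar>pi_beta a ginv mG d e t f x\<bar>)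
                 \<le> ennreal (C * (measure mG (Bt d e R) / measure mG (Bt d e (R - r))) powr (1/p))
                    * Lp_norm M p (\<lambda>x. ennreal \<bar>f x\<bar>)))
       \<and> ((\<forall>s>0. ((\<lambda>R. measure mG (Bt d e R) / measure mG (Bt d e (R - s))) \<longlongrightarrow> 1) at_top)
           \<and> (\<forall>s>0. local_max_ineq gm mG d e p C s) \<longrightarrow>
            (\<forall>f. in_Lp M p f \<longrightarrow>
               Lp_norm M p (\<lambda>x. SUP t\<in>{0<..}. ennreal \<bar>pi_beta a ginv mG d e t f x\<bar>)
                 \<le> ennreal C * Lp_norm M p (\<lambda>x. ennreal \<bar>f x\<bar>)))"
proof -
  have lh: "left_haar gm mG" using haar by (simp add: unimodular_haar_def)
  interpret ts gm e ginv mG d p M a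
    by (rule ts.intro[OF G lh metric balls p act sf])
  show ?thesis
  proof (intro conjI impI)
    assume "0 < r \<and> local_max_ineq gm mG d e p C r"
    then show "\<forall>f R. in_Lp M p f \<and> 2 * r \<le> R \<longrightarrow>
               Lp_norm M p (\<lambda>x. SUP t\<in>{0<..r}. ennreal \<bar>pi_beta a ginv mG d e t f x\<bar>)
                 \<le> ennreal (C * (measure mG (Bt d e R) / measure mG (Bt d e (R - r))) powr (1/p))
                    * Lp_norm M p (\<lambda>x. ennreal \<bar>f x\<bar>)"
      using final by blast
  next
    assume "(\<forall>s>0. ((\<lambda>R. measure mG (Bt d e R) / measure mG (Bt d e (R - s))) \<longlongrightarrow> 1) at_top)
           \<and> (\<forall>s>0. local_max_ineq gm mG d e p C s)"
    then show "\<forall>f. in_Lp M p f \<longrightarrow>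
               Lp_norm M p (\<lambda>x. SUP t\<in>{0<..}. ennreal \<bar>pi_beta a ginv mG d e t f x\<bar>)
                 \<le> ennreal C * Lp_norm M p (\<lambda>x. ennreal \<bar>f x\<bar>)"
      using final2 by blast
  qed
qed

end
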